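(* Let $G$ be a compact group and $V$ a finite-dimensional unitary complex representation with $V\cong\bigoplus_{\ell=1}^L V_\ell^{\oplus R_\ell}$, where the $V_\ell$ are pairwise non-isomorphic irreducible representations with $\dim V_\ell=N_\ell$. Represent each $f\in V$ by an $L$-tuple $(A_1,\ldots,A_L)$ of complex $N_\ell\times R_\ell$ matrices (the $i$-th column of $A_\ell$ being the coordinates, in a fixed orthonormal basis of $V_\ell$, of the component of $f$ in the $i$-th copy of $V_\ell$), and let $H=\prod_{\ell=1}^L U(N_\ell)$ act by $(U_\ell)_\ell\cdot(A_\ell)_\ell=(U_\ell A_\ell)_\ell$. Let $\mathcal L_f$ denote the complex linear span of the orbit $H\cdot f$. Then $$\dim_{\mathbb C}\mathcal L_f=\sum_{\ell=1}^L(\operatorname{rank}A_\ell)\,N_\ell,$$ and in particular $\dim_{\mathbb C}\mathcal L_f\le\sum_{\ell=1}^L\min(N_\ell R_\ell,N_\ell^2)$.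
   Context: $\mathcal L_f=\{\sum_i a_i(h_i\cdot f): a_i\in\mathbb C,\ h_i\in H\}$ is the smallest complex linear subspace of $V$ containing $H\cdot f$. *)

theory Defs
  imports "Jordan_Normal_Form.DL_Rank" "HOL-Library.Function_Algebras"
begin

definition conj_transpose :: "complex mat \<Rightarrow> complex mat" where
  "conj_transpose U = mat (dim_col U) (dim_row U) (\<lambda>(i, j). cnj (U $$ (j, i)))"

definition unitary_mat :: "nat \<Rightarrow> complex mat \<Rightarrow> bool" where
  "unitary_mat n U \<longleftrightarrow> U \<in> carrier_mat n n \<and>
     conj_transpose U * U = 1\<^sub>m n \<and> U * conj_transpose U = 1\<^sub>m n"

text \<open>An element f of V is an L-tuple of matrices (A_l)_{l<L}, A_l of size N_l x R_l.
  We identify it with its coordinate function (l,i,j) -> (A_l)_{ij}, zero outside the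
  index range; the space of such coordinate functions is a complex vector space under
  pointwise operations.\<close>
definition tuple_coords ::
    "nat \<Rightarrow> (nat \<Rightarrow> nat) \<Rightarrow> (nat \<Rightarrow> nat) \<Rightarrow> (nat \<Rightarrow> complex mat) \<Rightarrow> nat \<Rightarrow> nat \<Rightarrow> nat \<Rightarrow> complex" where
  "tuple_coords L N R F = (\<lambda>l i j. if l < L \<and> i < N l \<and> j < R l then F l $$ (i, j) else 0)"

definition cscale :: "complex \<Rightarrow> (nat \<Rightarrow> nat \<Rightarrow> nat \<Rightarrow> complex) \<Rightarrow> (nat \<Rightarrow> nat \<Rightarrow> nat \<Rightarrow> complex)" where
  "cscale c f = (\<lambda>l i j. c * f l i j)"

definition H_orbit ::
    "nat \<Rightarrow> (nat \<Rightarrow> nat) \<Rightarrow> (nat \<Rightarrow> nat) \<Rightarrow> (nat \<Rightarrow> complex mat) \<Rightarrow> (nat \<Rightarrow> nat \<Rightarrow> nat \<Rightarrow> complex) set" where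
  "H_orbit L N R A = {tuple_coords L N R (\<lambda>l. U l * A l) | U. \<forall>l<L. unitary_mat (N l) (U l)}"

definition L_span ::
    "nat \<Rightarrow> (nat \<Rightarrow> nat) \<Rightarrow> (nat \<Rightarrow> nat) \<Rightarrow> (nat \<Rightarrow> complex mat) \<Rightarrow> (nat \<Rightarrow> nat \<Rightarrow> nat \<Rightarrow> complex) set" where
  "L_span L N R A = module.span cscale (H_orbit L N R A)"

end

theory Submission
  imports Defs
begin

lemma rank_fact:
  fixes A :: "complex mat"
  assumes A: "A \<in> carrier_mat n m"
  defines "r \<equiv> vec_space.rank n A"
  shows "\<exists>C js. C \<in> carrier_mat n r \<and> (\<forall>x\<in>carrier_vec r. C *\<^sub>v x = 0\<^sub>v n \<longrightarrow> x = 0\<^sub>v r)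
     \<and> (\<forall>k<r. js k < m \<and> col C k = col A (js k))
     \<and> (\<forall>j<m. \<exists>y\<in>carrier_vec r. col A j = C *\<^sub>v y) \<and> r \<le> n"
proof -
  interpret vec_space "TYPE(complex)" n .
  define P where "P = (\<lambda>T. T \<subseteq> set (cols A) \<and> lin_indpt T)"
  have P0: "P {}" unfolding P_def lin_dep_def by auto
  obtain S where Sf: "finite S" and Smax: "maximal S P"
    using maximal_exists_superset[of "set (cols A)" P "{}"] P0 unfolding P_def by blast
  have rS: "r = card S" unfolding r_def using rank_card_indpt[OF A] Smax unfolding P_def by blast
  have SA: "S \<subseteq> set (cols A)" and Sli: "lin_indpt S" using Smax unfolding maximal_def P_def by auto
  have Scar: "S \<subseteq> carrier_vec n" using SA A cols_dim by blast
  obtain cs where cs: "distinct cs" "set cs = S" using finite_distinct_list[OF Sf] by blast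
  have lcs: "length cs = r" using rS cs distinct_card by fastforce
  define C where "C = mat_of_cols n cs"
  have Ccar: "C \<in> carrier_mat n r" unfolding C_def using lcs by auto
  have colsC: "cols C = cs" unfolding C_def using cs Scar by simp
  have ker: "\<forall>x\<in>carrier_vec r. C *\<^sub>v x = 0\<^sub>v n \<longrightarrow> x = 0\<^sub>v r"
  proof (intro ballI impI, rule ccontr)
    fix x assume x: "x \<in> carrier_vec r" "C *\<^sub>v x = 0\<^sub>v n" "x \<noteq> 0\<^sub>v r"
    have "lin_dep (set (cols C))" using lin_depI[OF Ccar x(1) x(3) x(2)] colsC cs by simp
    then show False using Sli colsC cs by simp
  qed
  have js: "\<exists>js. \<forall>k<r. js k < m \<and> col C k = col A (js k)"
  proof -
    have "\<forall>k<r. \<exists>j. j < m \<and> col C k = col A j"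
    proof (intro allI impI)
      fix k assume k: "k < r"
      have "cs ! k \<in> set (cols A)" using SA cs k lcs nth_mem by blast
      then obtain j where j: "j < length (cols A)" "cs ! k = cols A ! j" by (metis in_set_conv_nth)
      have "col C k = cs ! k" unfolding C_def using k lcs Scar cs nth_mem by (intro col_mat_of_cols) auto
      then show "\<exists>j. j < m \<and> col C k = col A j" using j A by auto
    qed
    then show ?thesis by metis
  qed
  have sp: "\<forall>j<m. \<exists>y\<in>carrier_vec r. col A j = C *\<^sub>v y"
  proof (intro allI impI)
    fix j assume j: "j < m"
    define v where "v = col A j"
    have vA: "v \<in> set (cols A)" unfolding v_def using j A by (simp add: cols_def)
    have vc: "v \<in> carrier_vec n" unfolding v_def using A by auto
    have "v \<in> span S"
    proof (cases "v \<in> S")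
      case True then show ?thesis using in_own_span Scar by auto
    next
      case False
      have "\<not> P (S \<union> {v})"
      proof
        assume "P (S \<union> {v})"
        then have "S \<union> {v} = S" using Smax unfolding maximal_def by blast
        then show False using False by auto
      qed
      then have "lin_dep (S \<union> {v})" unfolding P_def using SA vA by auto
      then show ?thesis using lin_dep_iff_in_span[OF Scar Sli vc False] by simp
    qed
    then obtain a where a: "lincomb a S = v" using finite_in_span[OF Sf Scar] by blast
    have "C *\<^sub>v vec r (\<lambda>i. a (col C i)) = lincomb a (set (cols C))"
      using mat_mult_eq_lincomb[OF Ccar] colsC cs by simp
    then show "\<exists>y\<in>carrier_vec r. col A j = C *\<^sub>v y" using a colsC cs v_def by (intro bexI[of _ "vec r (\<lambda>i. a (col C i))"]) auto
  qed
  have "r \<le> n" using li_le_dim(2)[OF fin_dim Scar Sli] dim_is_n rS by simp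
  then show ?thesis using Ccar ker js sp by blast
qed

lemma conj_transpose_carrier[simp]: "C \<in> carrier_mat n r \<Longrightarrow> conj_transpose C \<in> carrier_mat r n"
  unfolding conj_transpose_def by auto

lemma conj_transpose_index[simp]: "C \<in> carrier_mat n r \<Longrightarrow> k < r \<Longrightarrow> i < n \<Longrightarrow> conj_transpose C $$ (k,i) = cnj (C $$ (i,k))"
  unfolding conj_transpose_def by auto

lemma conj_transpose_dims[simp]: "dim_row (conj_transpose C) = dim_col C" "dim_col (conj_transpose C) = dim_row C"
  unfolding conj_transpose_def by auto

lemma mult_mat_index_sum: "A \<in> carrier_mat n m \<Longrightarrow> B \<in> carrier_mat m p \<Longrightarrow> i < n \<Longrightarrow> j < p \<Longrightarrow>
   (A * B) $$ (i,j) = (\<Sum>k<m. A $$ (i,k) * B $$ (k,j))"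
  by (auto simp: scalar_prod_def lessThan_atLeast0 intro!: sum.cong)

definition Pm :: "nat \<Rightarrow> (nat \<Rightarrow> nat) \<Rightarrow> (nat \<Rightarrow> complex) \<Rightarrow> complex mat" where
  "Pm n \<tau> s = mat n n (\<lambda>(i,j). if i = \<tau> j then s j else 0)"

definition good_perm :: "nat \<Rightarrow> (nat \<Rightarrow> nat) \<Rightarrow> (nat \<Rightarrow> complex) \<Rightarrow> bool" where
  "good_perm n \<tau> s \<longleftrightarrow> (\<forall>j<n. \<tau> j < n \<and> \<tau> (\<tau> j) = j \<and> (s j = 1 \<or> s j = -1))"

lemma Pm_carrier[simp]: "Pm n \<tau> s \<in> carrier_mat n n" unfolding Pm_def by simp

lemma Pm_dims[simp]: "dim_row (Pm n \<tau> s) = n" "dim_col (Pm n \<tau> s) = n" unfolding Pm_def by auto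

lemma Pm_index: "i < n \<Longrightarrow> j < n \<Longrightarrow> Pm n \<tau> s $$ (i,j) = (if i = \<tau> j then s j else 0)"
  unfolding Pm_def by simp

lemma Pm_ct_index: "i < n \<Longrightarrow> j < n \<Longrightarrow> conj_transpose (Pm n \<tau> s) $$ (i,j) = (if j = \<tau> i then cnj (s i) else 0)"
proof -
  assume a: "i < n" "j < n"
  have "conj_transpose (Pm n \<tau> s) $$ (i,j) = cnj (Pm n \<tau> s $$ (j,i))"
    by (rule conj_transpose_index[OF Pm_carrier]) (use a in auto)
  then show ?thesis using a by (simp add: Pm_index)
qed

lemma Pm_mult:
  assumes g: "good_perm n \<tau> s" and A: "A \<in> carrier_mat n m" and x: "x < n" and b: "b < m"
  shows "(Pm n \<tau> s * A) $$ (x,b) = s (\<tau> x) * A $$ (\<tau> x, b)"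
proof -
  have "(Pm n \<tau> s * A) $$ (x,b) = (\<Sum>y<n. Pm n \<tau> s $$ (x,y) * A $$ (y,b))"
    using mult_mat_index_sum[OF Pm_carrier A x b] .
  also have "\<dots> = (\<Sum>y<n. if y = \<tau> x then s (\<tau> x) * A $$ (\<tau> x, b) else 0)"
  proof (intro sum.cong refl)
    fix y assume y: "y \<in> {..<n}"
    have "\<tau> (\<tau> y) = y" "\<tau> (\<tau> x) = x" using g x y unfolding good_perm_def by auto
    then have "(x = \<tau> y) = (y = \<tau> x)" by metis
    then show "Pm n \<tau> s $$ (x,y) * A $$ (y,b) = (if y = \<tau> x then s (\<tau> x) * A $$ (\<tau> x, b) else 0)"
      using x y by (simp add: Pm_index)
  qed
  also have "\<dots> = s (\<tau> x) * A $$ (\<tau> x, b)" using g x unfolding good_perm_def by simp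
  finally show ?thesis .
qed

lemma Pm_unitary:
  assumes g: "good_perm n \<tau> s"
  shows "unitary_mat n (Pm n \<tau> s)"
proof -
  have sq: "cnj (s j) * s j = 1" "s j * cnj (s j) = 1" if "j < n" for j
    using g that unfolding good_perm_def by auto
  have inj: "\<tau> i = \<tau> j \<longleftrightarrow> i = j" if "i < n" "j < n" for i j
  proof -
    have "\<tau> (\<tau> i) = i" "\<tau> (\<tau> j) = j" using g that unfolding good_perm_def by auto
    then show ?thesis by metis
  qed
  have 1: "conj_transpose (Pm n \<tau> s) * Pm n \<tau> s = 1\<^sub>m n"
  proof (rule eq_matI)
    fix i j assume i: "i < dim_row (1\<^sub>m n)" and j: "j < dim_col (1\<^sub>m n)"
    then have i: "i < n" and j: "j < n" by auto
    have "(conj_transpose (Pm n \<tau> s) * Pm n \<tau> s) $$ (i,j)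
        = (\<Sum>y<n. conj_transpose (Pm n \<tau> s) $$ (i,y) * Pm n \<tau> s $$ (y,j))"
      by (rule mult_mat_index_sum[OF _ Pm_carrier i j]) simp
    also have "\<dots> = (\<Sum>y<n. if y = \<tau> i then (if i = j then 1 else 0) else 0)"
      by (intro sum.cong refl) (use i j inj sq in \<open>auto simp: Pm_index Pm_ct_index\<close>)
    also have "\<dots> = 1\<^sub>m n $$ (i,j)" using i j g unfolding good_perm_def by simp
    finally show "(conj_transpose (Pm n \<tau> s) * Pm n \<tau> s) $$ (i,j) = 1\<^sub>m n $$ (i,j)" .
  qed auto
  have 2: "Pm n \<tau> s * conj_transpose (Pm n \<tau> s) = 1\<^sub>m n"
  proof (rule eq_matI)
    fix i j assume i: "i < dim_row (1\<^sub>m n)" and j: "j < dim_col (1\<^sub>m n)"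
    then have i: "i < n" and j: "j < n" by auto
    have "(Pm n \<tau> s * conj_transpose (Pm n \<tau> s)) $$ (i,j)
        = (\<Sum>y<n. Pm n \<tau> s $$ (i,y) * conj_transpose (Pm n \<tau> s) $$ (y,j))"
      by (rule mult_mat_index_sum[OF Pm_carrier _ i j]) simp
    also have "\<dots> = (\<Sum>y<n. if y = \<tau> i then (if i = j then 1 else 0) else 0)"
    proof (intro sum.cong refl)
      fix y assume y: "y \<in> {..<n}"
      have y': "y < n" using y by simp
      have "\<tau> (\<tau> y) = y" "\<tau> (\<tau> i) = i" "\<tau> (\<tau> j) = j" using g i j y unfolding good_perm_def by auto
      then have e1: "(i = \<tau> y) = (y = \<tau> i)" "(j = \<tau> y) = (y = \<tau> j)" by metis+
      show "Pm n \<tau> s $$ (i,y) * conj_transpose (Pm n \<tau> s) $$ (y,j) = (if y = \<tau> i then (if i = j then 1 else 0) else 0)"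
      proof (cases "y = \<tau> i")
        case True
        note yi = True
        show ?thesis
        proof (cases "i = j")
          case True
          have "s (\<tau> i) * cnj (s (\<tau> i)) = 1" using sq(2) yi y' by simp
          then show ?thesis using i j y' yi True e1 by (simp add: Pm_index Pm_ct_index)
        next
          case False
          then have "\<tau> i \<noteq> \<tau> j" using inj i j by simp
          then have "j \<noteq> \<tau> y" using e1 yi by simp
          then show ?thesis using i j y' yi False e1 by (simp add: Pm_index Pm_ct_index)
        qed
      next
        case False
        then have "i \<noteq> \<tau> y" using e1 by simp
        then show ?thesis using i j y' False by (simp add: Pm_index Pm_ct_index)
      qed
    qed
    also have "\<dots> = 1\<^sub>m n $$ (i,j)" using i j g unfolding good_perm_def by simp
    finally show "(Pm n \<tau> s * conj_transpose (Pm n \<tau> s)) $$ (i,j) = 1\<^sub>m n $$ (i,j)" .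
  qed auto
  show ?thesis unfolding unitary_mat_def using 1 2 by simp
qed


lemma mult_mat_vec_index_sum: "A \<in> carrier_mat n m \<Longrightarrow> v \<in> carrier_vec m \<Longrightarrow> i < n \<Longrightarrow>
   (A *\<^sub>v v) $ i = (\<Sum>j<m. A $$ (i,j) * v $ j)"
  by (auto simp: scalar_prod_def lessThan_atLeast0 intro!: sum.cong)

lemma left_inverse_exists:
  fixes C :: "complex mat"
  assumes C: "C \<in> carrier_mat n r" and ker: "\<forall>x\<in>carrier_vec r. C *\<^sub>v x = 0\<^sub>v n \<longrightarrow> x = 0\<^sub>v r"
  shows "\<exists>D. D \<in> carrier_mat r n \<and> D * C = 1\<^sub>m r"
proof -
  define CH where "CH = conj_transpose C"
  have CH: "CH \<in> carrier_mat r n" unfolding CH_def using C by simp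
  define G where "G = CH * C"
  have G: "G \<in> carrier_mat r r" unfolding G_def using C CH by simp
  have Gker: "x = 0\<^sub>v r" if x: "x \<in> carrier_vec r" and Gx: "G *\<^sub>v x = 0\<^sub>v r" for x
  proof -
    define y where "y = C *\<^sub>v x"
    have y: "y \<in> carrier_vec n" unfolding y_def by (rule mult_mat_vec_carrier[OF C x])
    have "CH *\<^sub>v y = 0\<^sub>v r" using Gx unfolding y_def G_def using assoc_mult_mat_vec[OF CH C x] by simp
    then have e: "\<forall>k<r. (\<Sum>i<n. cnj (C $$ (i,k)) * y $ i) = 0"
    proof (intro allI impI)
      fix k assume k: "k < r" and h: "CH *\<^sub>v y = 0\<^sub>v r"
      have "(CH *\<^sub>v y) $ k = 0" using h k by simp
      then show "(\<Sum>i<n. cnj (C $$ (i,k)) * y $ i) = 0"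
        using CH C y k mult_mat_vec_index_sum[OF CH y k] by (simp add: CH_def)
    qed
    have yi: "\<And>i. i < n \<Longrightarrow> y $ i = (\<Sum>k<r. C $$ (i,k) * x $ k)"
      unfolding y_def by (rule mult_mat_vec_index_sum[OF C x])
    have "(\<Sum>i<n. cnj (y $ i) * y $ i) = (\<Sum>i<n. (\<Sum>k<r. cnj (C $$ (i,k)) * cnj (x $ k)) * y $ i)"
      by (intro sum.cong refl) (simp add: yi)
    also have "\<dots> = (\<Sum>k<r. cnj (x $ k) * (\<Sum>i<n. cnj (C $$ (i,k)) * y $ i))"
      by (simp add: sum_distrib_left sum_distrib_right sum.swap[of _ "{..<n}"] mult.commute mult.left_commute)
    also have "\<dots> = 0" using e by simp
    finally have s0: "(\<Sum>i<n. cnj (y $ i) * y $ i) = 0" .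
    have "(\<Sum>i<n. (cmod (y $ i))^2) = 0"
    proof -
      have "complex_of_real (\<Sum>i<n. (cmod (y $ i))^2) = (\<Sum>i<n. cnj (y $ i) * y $ i)"
        unfolding of_real_sum complex_norm_square by (simp add: mult.commute)
      then show ?thesis using s0 of_real_eq_0_iff by metis
    qed
    then have "\<forall>i<n. y $ i = 0" by (simp add: sum_nonneg_eq_0_iff)
    then have "C *\<^sub>v x = 0\<^sub>v n" using y unfolding y_def[symmetric] by (intro eq_vecI) auto
    then show ?thesis using ker x by blast
  qed
  have dG: "det G \<noteq> 0" using Gker det_0_iff_vec_prod_zero[OF G] by blast
  obtain Gi where Gi: "mat_inverse G = Some Gi"
  proof (cases "mat_inverse G")
    case None
    then have "G \<notin> Units (ring_mat TYPE(complex) r ())" by (rule mat_inverse(1)[OF G])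
    with det_non_zero_imp_unit[OF G dG, where b="()"] show ?thesis by blast
  next
    case (Some Gi) then show ?thesis using that by blast
  qed
  then have Gi': "Gi * G = 1\<^sub>m r" "Gi \<in> carrier_mat r r" using mat_inverse(2)[OF G] by auto
  have "(Gi * CH) * C = Gi * (CH * C)" using Gi' CH C by (simp add: assoc_mult_mat)
  then have "(Gi * CH) * C = 1\<^sub>m r" using Gi' unfolding G_def by simp
  moreover have "Gi * CH \<in> carrier_mat r n" using Gi' CH by simp
  ultimately show ?thesis by blast
qed


lemma block_data:
  fixes A :: "complex mat"
  assumes A: "A \<in> carrier_mat n m"
  defines "r \<equiv> vec_space.rank n A"
  shows "\<exists>C D js. C \<in> carrier_mat n r \<and> D \<in> carrier_mat r n \<and> C * (D * A) = A \<and>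
     (\<forall>k<r. js k < m \<and> (\<forall>k'<r. (D * A) $$ (k', js k) = (if k' = k then 1 else 0))) \<and> r \<le> n"
proof -
  obtain C js where C: "C \<in> carrier_mat n r" and ker: "\<forall>x\<in>carrier_vec r. C *\<^sub>v x = 0\<^sub>v n \<longrightarrow> x = 0\<^sub>v r"
    and js: "\<forall>k<r. js k < m \<and> col C k = col A (js k)"
    and sp: "\<forall>j<m. \<exists>y\<in>carrier_vec r. col A j = C *\<^sub>v y" and rn: "r \<le> n"
    using rank_fact[OF A] unfolding r_def by blast
  obtain D where D: "D \<in> carrier_mat r n" and DC: "D * C = 1\<^sub>m r"
    using left_inverse_exists[OF C ker] by blast
  have DA: "D * A \<in> carrier_mat r m" using D A by simp
  have eq: "C * (D * A) = A"
  proof (rule mat_col_eqI)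
    fix j assume "j < dim_col A"
    then have j: "j < m" using A by simp
    obtain y where y: "y \<in> carrier_vec r" "col A j = C *\<^sub>v y" using sp j by blast
    have "col (C * (D * A)) j = C *\<^sub>v col (D * A) j" using col_mult2[OF C DA j] .
    also have "col (D * A) j = D *\<^sub>v col A j" using col_mult2[OF D A j] .
    also have "D *\<^sub>v col A j = (D * C) *\<^sub>v y" using y assoc_mult_mat_vec[OF D C y(1)] by simp
    also have "\<dots> = y" using DC y by simp
    finally show "col (C * (D * A)) j = col A j" using y by simp
  qed (use C DA A in auto)
  have unit: "(D * A) $$ (k', js k) = (if k' = k then 1 else 0)" if k: "k < r" and k': "k' < r" for k k'
  proof -
    have jk: "js k < m" using js k by blast
    have "col (D * A) (js k) = D *\<^sub>v col A (js k)" using col_mult2[OF D A jk] .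
    also have "\<dots> = D *\<^sub>v col C k" using js k by simp
    also have "\<dots> = col (D * C) k" using col_mult2[OF D C k] by simp
    also have "\<dots> = unit_vec r k" using DC k by simp
    finally have "col (D * A) (js k) = unit_vec r k" .
    then have "col (D * A) (js k) $ k' = unit_vec r k $ k'" by simp
    moreover have "col (D * A) (js k) $ k' = (D * A) $$ (k', js k)"
      by (rule index_col) (use DA jk k' in auto)
    ultimately show ?thesis using k k' by simp
  qed
  show ?thesis using C D eq unit js rn by blast
qed

lemma vs_cscale: "vector_space cscale"
  by unfold_locales (auto simp: cscale_def fun_eq_iff algebra_simps)

lemma sum_fun_app: "(sum f S) x = sum (\<lambda>a. f a x) S"
  by (induction S rule: infinite_finite_induct) auto

lemma cscale_app: "cscale c f l i j = c * f l i j" unfolding cscale_def by simp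


lemma tc_app: "tuple_coords L N R F l i j = (if l < L \<and> i < N l \<and> j < R l then F l $$ (i, j) else 0)"
  unfolding tuple_coords_def by simp

lemma blk_in_span:
  fixes L :: nat and N R :: "nat \<Rightarrow> nat" and A :: "nat \<Rightarrow> complex mat"
  assumes Acar: "\<forall>l<L. A l \<in> carrier_mat (N l) (R l)"
    and l0: "l0 < L" and M: "M \<in> carrier_mat (N l0) (N l0)"
  shows "(\<lambda>l a b. if l = l0 \<and> a < N l0 \<and> b < R l0 then (M * A l0) $$ (a,b) else 0)
          \<in> module.span cscale (H_orbit L N R A)"
proof -
  interpret V: vector_space cscale by (rule vs_cscale)
  let ?S = "module.span cscale (H_orbit L N R A)"
  have A0: "A l0 \<in> carrier_mat (N l0) (R l0)" using Acar l0 by blast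
  define E where "E (a::nat) (c::nat) = (\<lambda>(l::nat) (x::nat) (b::nat). if l = l0 \<and> x = a \<and> b < R l0 then A l0 $$ (c,b) else (0::complex))" for a c
  have Ein: "E a c \<in> ?S" if a: "a < N l0" and c: "c < N l0" for a c
  proof -
    define \<tau> where "\<tau> = (\<lambda>y::nat. if y = a then c else if y = c then a else y)"
    define Uf where "Uf s = (\<lambda>l. if l = l0 then Pm (N l0) \<tau> s else Pm (N l) id (\<lambda>_. 1))" for s
    define orb where "orb s = tuple_coords L N R (\<lambda>l. Uf s l * A l)" for s
    have oin: "orb s \<in> H_orbit L N R A" if s: "\<forall>j. s j = 1 \<or> s j = -1" for s
    proof -
      have "\<forall>l<L. unitary_mat (N l) (Uf s l)"
      proof (intro allI impI)
        fix l assume "l < L"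
        show "unitary_mat (N l) (Uf s l)"
        proof (cases "l = l0")
          case True
          have "good_perm (N l0) \<tau> s" unfolding good_perm_def \<tau>_def using a c s by auto
          then show ?thesis using True Pm_unitary unfolding Uf_def by simp
        next
          case False
          have "good_perm (N l) id (\<lambda>_. 1)" unfolding good_perm_def by auto
          then show ?thesis using False Pm_unitary unfolding Uf_def by simp
        qed
      qed
      then show ?thesis unfolding H_orbit_def orb_def by blast
    qed
    define s1 where "s1 = (\<lambda>y::nat. 1::complex)"
    define s2 where "s2 = (\<lambda>y::nat. -1::complex)"
    define s3 where "s3 = (\<lambda>y::nat. if y = c then 1 else -1::complex)"
    define s4 where "s4 = (\<lambda>y::nat. if y = c then -1 else 1::complex)"
    have ss: "\<forall>j. s1 j = 1 \<or> s1 j = -1" "\<forall>j. s2 j = 1 \<or> s2 j = -1" "\<forall>j. s3 j = 1 \<or> s3 j = -1" "\<forall>j. s4 j = 1 \<or> s4 j = -1"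
      unfolding s1_def s2_def s3_def s4_def by auto
    have oval: "orb s l x b = s (\<tau> x) * A l0 $$ (\<tau> x, b)"
      if "\<forall>j. s j = 1 \<or> s j = -1" "l = l0" "x < N l0" "b < R l0" for s l x b
    proof -
      have "good_perm (N l0) \<tau> s" unfolding good_perm_def \<tau>_def using a c that by auto
      then show ?thesis using that l0 Pm_mult[OF _ A0] unfolding orb_def Uf_def by (simp add: tc_app)
    qed
    have oval2: "orb s l x b = orb s' l x b" if "l \<noteq> l0" for s s' l x b
      using that unfolding orb_def Uf_def by (simp add: tc_app)
    have "E a c = cscale (1/4) (orb s1 - orb s2 + orb s3 - orb s4)"
    proof (intro ext)
      fix l x b
      show "E a c l x b = cscale (1/4) (orb s1 - orb s2 + orb s3 - orb s4) l x b"
      proof (cases "l = l0 \<and> x < N l0 \<and> b < R l0")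
        case True
        then have tx: "\<tau> x = c \<longleftrightarrow> x = a" unfolding \<tau>_def by auto
        show ?thesis using True oval[OF ss(1)] oval[OF ss(2)] oval[OF ss(3)] oval[OF ss(4)] tx
          unfolding E_def cscale_def s1_def s2_def s3_def s4_def
          by (auto simp: algebra_simps \<tau>_def)
      next
        case False
        show ?thesis
        proof (cases "l = l0")
          case True
          then have "\<not> (x < N l0 \<and> b < R l0)" using False by simp
          then have "orb s l x b = 0" for s using True unfolding orb_def by (auto simp: tc_app)
          then show ?thesis using False a unfolding E_def cscale_def by auto
        next
          case ne: False
          have "orb s2 l x b = orb s1 l x b" "orb s3 l x b = orb s1 l x b" "orb s4 l x b = orb s1 l x b"
            using oval2[OF ne] by blast+
          then show ?thesis using ne unfolding E_def cscale_def by simp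
        qed
      qed
    qed
    moreover have "cscale (1/4) (orb s1 - orb s2 + orb s3 - orb s4) \<in> ?S"
      using oin ss by (intro V.span_scale V.span_diff V.span_add V.span_base) auto
    ultimately show ?thesis by simp
  qed
  have eq: "(\<lambda>l a b. if l = l0 \<and> a < N l0 \<and> b < R l0 then (M * A l0) $$ (a,b) else 0)
      = (\<Sum>a<N l0. \<Sum>c<N l0. cscale (M $$ (a,c)) (E a c))"
  proof (intro ext)
    fix l x b
    show "(if l = l0 \<and> x < N l0 \<and> b < R l0 then (M * A l0) $$ (x,b) else 0)
      = (\<Sum>a<N l0. \<Sum>c<N l0. cscale (M $$ (a,c)) (E a c)) l x b"
    proof (cases "l = l0 \<and> x < N l0 \<and> b < R l0")
      case True
      have "(\<Sum>a<N l0. \<Sum>c<N l0. cscale (M $$ (a,c)) (E a c)) l x b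
          = (\<Sum>a<N l0. \<Sum>c<N l0. M $$ (a,c) * E a c l x b)"
        by (simp add: sum_fun_app cscale_app)
      also have "\<dots> = (\<Sum>a<N l0. if a = x then (\<Sum>c<N l0. M $$ (x,c) * A l0 $$ (c,b)) else 0)"
        by (intro sum.cong refl) (use True in \<open>auto simp: E_def\<close>)
      also have "\<dots> = (\<Sum>c<N l0. M $$ (x,c) * A l0 $$ (c,b))" using True by simp
      also have "\<dots> = (M * A l0) $$ (x,b)" using mult_mat_index_sum[OF M A0] True by simp
      finally show ?thesis using True by simp
    next
      case False
      have "(\<Sum>a<N l0. \<Sum>c<N l0. cscale (M $$ (a,c)) (E a c)) l x b
          = (\<Sum>a<N l0. \<Sum>c<N l0. M $$ (a,c) * E a c l x b)"
        by (simp add: sum_fun_app cscale_app)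
      also have "\<dots> = 0"
        by (intro sum.neutral ballI) (use False in \<open>auto simp: E_def\<close>)
      finally show ?thesis using False by auto
    qed
  qed
  show ?thesis unfolding eq
    by (intro V.span_sum V.span_scale Ein) auto
qed


theorem proposition3p5:
  fixes L :: nat and N R :: "nat \<Rightarrow> nat" and A :: "nat \<Rightarrow> complex mat"
  assumes "\<forall>l<L. N l \<ge> 1 \<and> R l \<ge> 1"
    and "\<forall>l<L. A l \<in> carrier_mat (N l) (R l)"
  shows "vector_space.dim cscale (L_span L N R A) = (\<Sum>l<L. vec_space.rank (N l) (A l) * N l)
     \<and> vector_space.dim cscale (L_span L N R A) \<le> (\<Sum>l<L. min (N l * R l) (N l ^ 2))"
proof -
  interpret V: vector_space cscale by (rule vs_cscale)
  note Acar = assms(2)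
  define r where "r l = vec_space.rank (N l) (A l)" for l
  have "\<forall>l<L. \<exists>C D js. C \<in> carrier_mat (N l) (r l) \<and> D \<in> carrier_mat (r l) (N l) \<and> C * (D * A l) = A l \<and>
     (\<forall>k<r l. js k < R l \<and> (\<forall>k'<r l. (D * A l) $$ (k', js k) = (if k' = k then 1 else 0))) \<and> r l \<le> N l"
    using block_data Acar unfolding r_def by blast
  then obtain C D js where CDjs: "\<forall>l<L. C l \<in> carrier_mat (N l) (r l) \<and> D l \<in> carrier_mat (r l) (N l) \<and> C l * (D l * A l) = A l \<and>
     (\<forall>k<r l. js l k < R l \<and> (\<forall>k'<r l. (D l * A l) $$ (k', js l k) = (if k' = k then 1 else 0))) \<and> r l \<le> N l"
    by metis
  define B where "B l = D l * A l" for l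
  have Ccar: "C l \<in> carrier_mat (N l) (r l)" and Dcar: "D l \<in> carrier_mat (r l) (N l)"
    and Bcar: "B l \<in> carrier_mat (r l) (R l)" and CB: "C l * B l = A l"
    and jsR: "\<And>k. k < r l \<Longrightarrow> js l k < R l"
    and Bunit: "\<And>k k'. k < r l \<Longrightarrow> k' < r l \<Longrightarrow> B l $$ (k', js l k) = (if k' = k then 1 else 0)"
    and rN: "r l \<le> N l" if "l < L" for l
    using CDjs that Acar unfolding B_def by auto
  define Idx where "Idx = Sigma {..<L} (\<lambda>l. {..<N l} \<times> {..<r l})"
  define \<beta> where "\<beta> = (\<lambda>(l,i,k). (\<lambda>(l'::nat) (a::nat) (b::nat). if l' = l \<and> a = i \<and> b < R l then B l $$ (k,b) else (0::complex)))"
  define Bas where "Bas = \<beta> ` Idx"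
  have finIdx: "finite Idx" unfolding Idx_def by auto
  have Ev: "\<beta> q l i (js l k) = (if q = (l,i,k) then 1 else 0)" if p: "(l,i,k) \<in> Idx" and q: "q \<in> Idx" for l i k q
  proof -
    obtain l' i' k' where q': "q = (l',i',k')" by (cases q) auto
    have l: "l < L" "i < N l" "k < r l" using p unfolding Idx_def by auto
    have k': "k' < r l'" "l' < L" using q q' unfolding Idx_def by auto
    show ?thesis
    proof (cases "l' = l \<and> i' = i")
      case True
      then show ?thesis using q' Bunit[OF l(1) l(3)] k' jsR[OF l(1) l(3)] unfolding \<beta>_def by auto
    next
      case False
      then show ?thesis using q' unfolding \<beta>_def by auto
    qed
  qed
  have inj: "inj_on \<beta> Idx"
  proof (rule inj_onI)
    fix p q assume p: "p \<in> Idx" and q: "q \<in> Idx" and e: "\<beta> p = \<beta> q"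
    obtain l i k where p': "p = (l,i,k)" by (cases p) auto
    have "\<beta> p l i (js l k) = 1" using Ev[of l i k p] p p' by simp
    then have "\<beta> q l i (js l k) = 1" using e by simp
    then show "p = q" using Ev[of l i k q] p p' q by (auto split: if_splits)
  qed
  have cardIdx: "card Idx = (\<Sum>l<L. r l * N l)"
    unfolding Idx_def by (subst card_SigmaI) (auto simp: card_cartesian_product mult.commute)
  have indep: "V.independent Bas"
  proof
    assume "V.dependent Bas"
    then obtain t u v where t: "finite t" "t \<subseteq> Bas" and s0: "(\<Sum>w\<in>t. cscale (u w) w) = 0"
      and v: "v \<in> t" "u v \<noteq> 0"
      unfolding V.dependent_explicit by blast
    obtain p where p: "p \<in> Idx" "v = \<beta> p" using v t unfolding Bas_def by blast
    obtain l i k where p': "p = (l,i,k)" by (cases p) auto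
    have "0 = (\<Sum>w\<in>t. cscale (u w) w) l i (js l k)" using s0 by simp
    also have "\<dots> = (\<Sum>w\<in>t. u w * w l i (js l k))" by (simp add: sum_fun_app cscale_app)
    also have "\<dots> = (\<Sum>w\<in>t. if w = v then u w else 0)"
    proof (intro sum.cong refl)
      fix w assume w: "w \<in> t"
      then obtain q where q: "q \<in> Idx" "w = \<beta> q" using t unfolding Bas_def by blast
      have vv: "v l i (js l k) = 1" using Ev[of l i k p] p p' by simp
      show "u w * w l i (js l k) = (if w = v then u w else 0)"
      proof (cases "q = p")
        case True then show ?thesis using q p vv by simp
      next
        case False
        then have "w l i (js l k) = 0" using Ev[of l i k q] q p p' by simp
        then have "w \<noteq> v" using vv by auto
        then show ?thesis using \<open>w l i (js l k) = 0\<close> by simp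
      qed
    qed
    also have "\<dots> = u v" using v t by simp
    finally show False using v by simp
  qed
  have cardBas: "card Bas = (\<Sum>l<L. r l * N l)"
    unfolding Bas_def using card_image[OF inj] cardIdx by simp
  have orb_sub: "H_orbit L N R A \<subseteq> V.span Bas"
  proof
    fix w assume "w \<in> H_orbit L N R A"
    then obtain U where w: "w = tuple_coords L N R (\<lambda>l. U l * A l)" and U: "\<forall>l<L. unitary_mat (N l) (U l)"
      unfolding H_orbit_def by blast
    have Ucar: "U l \<in> carrier_mat (N l) (N l)" if "l < L" for l using U that unfolding unitary_mat_def by auto
    define coef where "coef = (\<lambda>(l,i,k). (U l * C l) $$ (i,k))"
    have weq: "w = (\<Sum>p\<in>Idx. cscale (coef p) (\<beta> p))"
    proof (intro ext)
      fix l0 a b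
      have rhs: "(\<Sum>p\<in>Idx. cscale (coef p) (\<beta> p)) l0 a b = (\<Sum>p\<in>Idx. coef p * \<beta> p l0 a b)"
        by (simp add: sum_fun_app cscale_app)
      show "w l0 a b = (\<Sum>p\<in>Idx. cscale (coef p) (\<beta> p)) l0 a b"
      proof (cases "l0 < L \<and> a < N l0 \<and> b < R l0")
        case True
        then have l0: "l0 < L" and a: "a < N l0" and b: "b < R l0" by auto
        let ?img = "(\<lambda>k. (l0,a,k)) ` {..<r l0}"
        have sub: "?img \<subseteq> Idx" unfolding Idx_def using l0 a by auto
        have "(\<Sum>p\<in>Idx. coef p * \<beta> p l0 a b) = (\<Sum>p\<in>?img. coef p * \<beta> p l0 a b)"
        proof (rule sum.mono_neutral_right[OF finIdx sub], rule ballI)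
          fix p assume pi: "p \<in> Idx - ?img"
          obtain l i k where p': "p = (l,i,k)" by (cases p) auto
          have "k < r l" using pi p' unfolding Idx_def by auto
          then have "\<not> (l = l0 \<and> i = a)" using pi p' by auto
          then show "coef p * \<beta> p l0 a b = 0" using p' unfolding \<beta>_def by auto
        qed
        also have "\<dots> = (\<Sum>k<r l0. coef (l0,a,k) * \<beta> (l0,a,k) l0 a b)"
          by (subst sum.reindex) (auto simp: inj_on_def)
        also have "\<dots> = (\<Sum>k<r l0. (U l0 * C l0) $$ (a,k) * B l0 $$ (k,b))"
          using b unfolding coef_def \<beta>_def by simp
        also have "\<dots> = ((U l0 * C l0) * B l0) $$ (a,b)"
          using mult_mat_index_sum[OF mult_carrier_mat[OF Ucar[OF l0] Ccar[OF l0]] Bcar[OF l0] a b] by simp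
        also have "\<dots> = (U l0 * A l0) $$ (a,b)"
          using assoc_mult_mat[OF Ucar[OF l0] Ccar[OF l0] Bcar[OF l0]] CB[OF l0] by simp
        also have "\<dots> = w l0 a b" using w True by (simp add: tc_app)
        finally show ?thesis using rhs by simp
      next
        case False
        have "(\<Sum>p\<in>Idx. coef p * \<beta> p l0 a b) = 0"
        proof (rule sum.neutral, rule ballI)
          fix p assume pi: "p \<in> Idx"
          obtain l i k where p': "p = (l,i,k)" by (cases p) auto
          have "l < L" "i < N l" using pi p' unfolding Idx_def by auto
          then show "coef p * \<beta> p l0 a b = 0" using p' False unfolding \<beta>_def by auto
        qed
        then show ?thesis using rhs w False by (auto simp: tc_app)
      qed
    qed
    show "w \<in> V.span Bas" unfolding weq Bas_def
      by (intro V.span_sum V.span_scale V.span_base) auto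
  qed
  have bas_sub: "Bas \<subseteq> V.span (H_orbit L N R A)"
  proof
    fix v assume "v \<in> Bas"
    then obtain l i k where p: "(l,i,k) \<in> Idx" and v: "v = \<beta> (l,i,k)" unfolding Bas_def by auto
    have l: "l < L" and i: "i < N l" and k: "k < r l" using p unfolding Idx_def by auto
    define Mk where "Mk = mat (N l) (N l) (\<lambda>(a,c). if a = i then D l $$ (k,c) else 0)"
    have Mk: "Mk \<in> carrier_mat (N l) (N l)" unfolding Mk_def by simp
    have "v = (\<lambda>l' a b. if l' = l \<and> a < N l \<and> b < R l then (Mk * A l) $$ (a,b) else 0)"
    proof (intro ext)
      fix l' a b
      show "v l' a b = (if l' = l \<and> a < N l \<and> b < R l then (Mk * A l) $$ (a,b) else 0)"
      proof (cases "l' = l \<and> a < N l \<and> b < R l")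
        case True
        then have a: "a < N l" and b: "b < R l" by auto
        have "(Mk * A l) $$ (a,b) = (\<Sum>c<N l. Mk $$ (a,c) * A l $$ (c,b))"
          using mult_mat_index_sum[OF Mk Acar[rule_format, OF l] a b] .
        also have "\<dots> = (if a = i then (\<Sum>c<N l. D l $$ (k,c) * A l $$ (c,b)) else 0)"
          using a unfolding Mk_def by (auto intro!: sum.neutral)
        also have "\<dots> = (if a = i then B l $$ (k,b) else 0)"
          using mult_mat_index_sum[OF Dcar[OF l] Acar[rule_format, OF l] k b] unfolding B_def by simp
        finally show ?thesis using True v b unfolding \<beta>_def by simp
      next
        case False
        then show ?thesis using v i unfolding \<beta>_def by auto
      qed
    qed
    then show "v \<in> V.span (H_orbit L N R A)" using blk_in_span[OF Acar l Mk] by simp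
  qed
  have span_eq: "L_span L N R A = V.span Bas"
    unfolding L_span_def using V.span_eq orb_sub bas_sub by blast
  have dimeq: "V.dim (L_span L N R A) = (\<Sum>l<L. r l * N l)"
    unfolding span_eq using V.dim_span_eq_card_independent[OF indep] cardBas by simp
  have le: "(\<Sum>l<L. r l * N l) \<le> (\<Sum>l<L. min (N l * R l) (N l ^ 2))"
  proof (rule sum_mono)
    fix l assume "l \<in> {..<L}"
    then have l: "l < L" by simp
    have rR: "r l \<le> R l" unfolding r_def using vec_space.rank_le_nc[OF Acar[rule_format, OF l]] .
    have "r l * N l \<le> N l * R l" using rR by (simp add: mult.commute)
    moreover have "r l * N l \<le> N l ^ 2" using rN[OF l] by (simp add: power2_eq_square)
    ultimately show "r l * N l \<le> min (N l * R l) (N l ^ 2)" by simp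
  qed
  show ?thesis using dimeq le unfolding r_def by simp
qed


end
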